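(* Let $i\in\{0,\dots,N\}$, $V_i=\mathrm{span}(v_1,\dots,v_i)$, and let $x=w+z$ with $w\in V_i$, $z\in V_i^\perp$, $z\neq 0$, and $|v_j\cdot z|<\kappa\|z\|$ for every $j>i$. Then \[ \mathcal W(x)=\sup_{a,b\ge 0:\ a^2+b^2\in[\delta^2,1]}\left\{-2\alpha(a^2+b^2)^{\frac{1+\alpha}{2}} + \frac{2(1+\alpha)}{(a^2+b^2)^{\frac{1-\alpha}{2}}}\Big(\sup_{y\in \tilde\Omega_{a,b}} y\cdot w + b\|z\|\Big)\right\}, \] where $\tilde\Omega_{a,b}=\{y\in V_i: \|y\|=a,\ |v_j\cdot y|<\kappa\sqrt{a^2+b^2}\ \text{for all } j\in[i]\}$, with the convention that the supremum of an empty set is $-\infty$. In particular, this value does not depend on $v_{i+1},\dots,v_N$.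
   Context: Let $v_1,\dots,v_N$ be an orthonormal family in $\mathbb{R}^d$. Let $\kappa>0$, $\delta\in(0,1)$, $\alpha>0$. Correlation cones: $C_i=\{x\ne 0: |v_i\cdot x|/\|x\|\ge \kappa\}$. Let $h(x)=2\|x\|^{1+\alpha}$, $\Omega=\{x\in\mathbb{R}^d: \|x\|\in[\delta,1],\ x\notin C_i \text{ for all } i\in[N]\}$, and wall function $\mathcal W(x)=\sup_{y\in\Omega}\{h(y)+\nabla h(y)\cdot(x-y)\}$. *)

theory Defs
  imports "HOL-Analysis.Analysis"
begin

definition grad :: "('a::euclidean_space \<Rightarrow> real) \<Rightarrow> 'a \<Rightarrow> 'a" where
  "grad f y = (THE D. GDERIV f y :> D)"

definition orthonormal_family :: "(nat \<Rightarrow> 'a::euclidean_space) \<Rightarrow> nat \<Rightarrow> bool" where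
  "orthonormal_family v N \<longleftrightarrow>
     (\<forall>i\<in>{1..N}. \<forall>j\<in>{1..N}. v i \<bullet> v j = (if i = j then 1 else 0))"

definition corr_cone :: "real \<Rightarrow> 'a::euclidean_space \<Rightarrow> 'a set" where
  "corr_cone \<kappa> u = {x. x \<noteq> 0 \<and> \<bar>u \<bullet> x\<bar> / norm x \<ge> \<kappa>}"

definition hfun :: "real \<Rightarrow> 'a::euclidean_space \<Rightarrow> real" where
  "hfun \<alpha> x = 2 * norm x powr (1 + \<alpha>)"

definition Omega :: "(nat \<Rightarrow> 'a::euclidean_space) \<Rightarrow> nat \<Rightarrow> real \<Rightarrow> real \<Rightarrow> 'a set" where
  "Omega v N \<kappa> \<delta> = {x. norm x \<in> {\<delta>..1} \<and> (\<forall>i\<in>{1..N}. x \<notin> corr_cone \<kappa> (v i))}"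

text \<open>Wall function, as an extended real (sup of the empty set is -infinity).\<close>
definition wall :: "(nat \<Rightarrow> 'a::euclidean_space) \<Rightarrow> nat \<Rightarrow> real \<Rightarrow> real \<Rightarrow> real \<Rightarrow> 'a \<Rightarrow> ereal" where
  "wall v N \<kappa> \<delta> \<alpha> x =
     (SUP y\<in>Omega v N \<kappa> \<delta>. ereal (hfun \<alpha> y + grad (hfun \<alpha>) y \<bullet> (x - y)))"

definition Omega_tilde :: "(nat \<Rightarrow> 'a::euclidean_space) \<Rightarrow> nat \<Rightarrow> real \<Rightarrow> real \<Rightarrow> real \<Rightarrow> 'a set" where
  "Omega_tilde v i \<kappa> a b = {y. y \<in> span (v ` {1..i}) \<and> norm y = a \<and>
       (\<forall>j\<in>{1..i}. \<bar>v j \<bullet> y\<bar> < \<kappa> * sqrt (a\<^sup>2 + b\<^sup>2))}"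

end

theory Submission
  imports Defs
begin

lemma grad_unique:
  assumes "GDERIV f y :> D" shows "grad f y = D"
  unfolding grad_def
proof (rule the_equality)
  show "GDERIV f y :> D" by (rule assms)
  fix D' assume "GDERIV f y :> D'"
  hence "(\<lambda>h. h \<bullet> D') = (\<lambda>h. h \<bullet> D)"
    using assms unfolding gderiv_def by (rule has_derivative_unique)
  hence "(D' - D) \<bullet> D' = (D' - D) \<bullet> D" by metis
  hence "(D' - D) \<bullet> (D' - D) = 0" by (simp add: inner_diff_right)
  thus "D' = D" by simp
qed

lemma grad_hfun:
  fixes y :: "'a::euclidean_space"
  assumes "y \<noteq> 0"
  shows "grad (hfun \<alpha>) y = (2 * (1 + \<alpha>) * norm y powr \<alpha>) *\<^sub>R sgn y"
proof -
  have n: "norm y > 0" using assms by simp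
  have d: "((\<lambda>t. 2 * t powr (1 + \<alpha>)) has_real_derivative 2 * ((1 + \<alpha>) * norm y powr \<alpha>)) (at (norm y))"
    using n by (auto intro!: derivative_eq_intros)
  have "GDERIV (\<lambda>x. 2 * norm x powr (1 + \<alpha>)) y :> (2 * ((1 + \<alpha>) * norm y powr \<alpha>)) *\<^sub>R sgn y"
    by (rule GDERIV_DERIV_compose[OF GDERIV_norm[OF assms] d])
  hence "GDERIV (hfun \<alpha>) y :> (2 * ((1 + \<alpha>) * norm y powr \<alpha>)) *\<^sub>R sgn y"
    unfolding hfun_def[abs_def] .
  hence "grad (hfun \<alpha>) y = (2 * ((1 + \<alpha>) * norm y powr \<alpha>)) *\<^sub>R sgn y"
    by (rule grad_unique)
  thus ?thesis by (simp only: mult.assoc)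
qed

lemma val_hfun:
  fixes y x :: "'a::euclidean_space"
  assumes "y \<noteq> 0"
  shows "hfun \<alpha> y + grad (hfun \<alpha>) y \<bullet> (x - y) =
     - 2 * \<alpha> * ((norm y)\<^sup>2) powr ((1 + \<alpha>) / 2)
     + 2 * (1 + \<alpha>) / ((norm y)\<^sup>2) powr ((1 - \<alpha>) / 2) * (y \<bullet> x)"
proof -
  define r where "r = norm y"
  have r: "r > 0" using assms r_def by simp
  have sq: "\<And>e. (r\<^sup>2) powr (e / 2) = r powr e"
  proof -
    fix e :: real
    have "r\<^sup>2 = r powr 2" using r by (simp add: powr_numeral)
    hence "(r\<^sup>2) powr (e / 2) = r powr (2 * (e / 2))" by (simp add: powr_powr)
    thus "(r\<^sup>2) powr (e / 2) = r powr e" by simp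
  qed
  have p1: "r powr (1 + \<alpha>) = r * r powr \<alpha>" using r by (simp add: powr_add)
  have p2: "r powr (1 - \<alpha>) = r / r powr \<alpha>" using r by (simp add: powr_diff)
  have yy: "y \<bullet> y = r\<^sup>2" by (simp add: r_def power2_norm_eq_inner)
  have g: "grad (hfun \<alpha>) y \<bullet> (x - y) = (2 * (1 + \<alpha>) * r powr \<alpha> / r) * (y \<bullet> x - r\<^sup>2)"
    unfolding grad_hfun[OF assms] sgn_div_norm r_def[symmetric]
    by (simp add: inner_diff_right yy divide_inverse right_diff_distrib)
  have h: "hfun \<alpha> y = 2 * (r * r powr \<alpha>)" unfolding hfun_def r_def[symmetric] p1 ..
  have "hfun \<alpha> y + grad (hfun \<alpha>) y \<bullet> (x - y) =
     2 * (r * r powr \<alpha>) + 2 * (1 + \<alpha>) * r powr \<alpha> / r * (y \<bullet> x - r\<^sup>2)"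
    unfolding g h ..
  also have "\<dots> = - 2 * \<alpha> * (r * r powr \<alpha>) + 2 * (1 + \<alpha>) / (r / r powr \<alpha>) * (y \<bullet> x)"
  proof -
    define q where "q = r powr \<alpha>"
    have e1: "2 * (1 + \<alpha>) / (r / q) = 2 * (1 + \<alpha>) * q / r" by simp
    have e2: "2 * (1 + \<alpha>) * q / r * r\<^sup>2 = 2 * (1 + \<alpha>) * (r * q)"
      using r by (simp add: power2_eq_square)
    have "2 * (r * q) + 2 * (1 + \<alpha>) * q / r * (y \<bullet> x - r\<^sup>2)
       = 2 * (r * q) + 2 * (1 + \<alpha>) * q / r * (y \<bullet> x) - 2 * (1 + \<alpha>) * q / r * r\<^sup>2"
      by (simp add: right_diff_distrib)
    also have "\<dots> = - 2 * \<alpha> * (r * q) + 2 * (1 + \<alpha>) / (r / q) * (y \<bullet> x)"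
      unfolding e1 e2 by (simp add: algebra_simps)
    finally show ?thesis unfolding q_def .
  qed
  finally show ?thesis unfolding r_def[symmetric] sq p1 p2 .
qed

lemma span_orth:
  fixes v :: "nat \<Rightarrow> 'a::euclidean_space"
  assumes "orthonormal_family v N" "i < j" "j \<le> N" "u \<in> span (v ` {1..i})"
  shows "v j \<bullet> u = 0"
proof -
  have "orthogonal (v j) u"
  proof (rule orthogonal_to_span[OF assms(4)])
    fix y assume "y \<in> v ` {1..i}"
    then obtain k where k: "k \<in> {1..i}" "y = v k" by auto
    have "v j \<bullet> v k = (if j = k then 1 else 0)"
      using assms(1) k assms(2,3) unfolding orthonormal_family_def by auto
    thus "orthogonal (v j) y" using k assms(2) by (auto simp: orthogonal_def)
  qed
  thus ?thesis by (simp add: orthogonal_def)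
qed

theorem mainTheorem3:
  fixes v :: "nat \<Rightarrow> 'a::euclidean_space"
    and N i :: nat and \<kappa> \<delta> \<alpha> :: real and x w z :: 'a
  assumes "orthonormal_family v N"
    and "\<kappa> > 0" and "0 < \<delta>" and "\<delta> < 1" and "\<alpha> > 0"
    and "i \<le> N"
    and "w \<in> span (v ` {1..i})"
    and "\<forall>u\<in>span (v ` {1..i}). z \<bullet> u = 0"
    and "z \<noteq> 0"
    and "\<forall>j\<in>{i<..N}. \<bar>v j \<bullet> z\<bar> < \<kappa> * norm z"
    and "x = w + z"
  shows "wall v N \<kappa> \<delta> \<alpha> x =
    (SUP ab\<in>{(a, b). a \<ge> 0 \<and> b \<ge> 0 \<and> a\<^sup>2 + b\<^sup>2 \<in> {\<delta>\<^sup>2..1}}.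
       (case ab of (a, b) \<Rightarrow>
          ereal (- 2 * \<alpha> * (a\<^sup>2 + b\<^sup>2) powr ((1 + \<alpha>) / 2))
          + ereal (2 * (1 + \<alpha>) / (a\<^sup>2 + b\<^sup>2) powr ((1 - \<alpha>) / 2))
            * ((SUP y\<in>Omega_tilde v i \<kappa> a b. ereal (y \<bullet> w)) + ereal (b * norm z))))"
  (is "?L = (SUP ab\<in>?I. ?T ab)")
proof -
  note orth = assms(1)
  define V where "V = span (v ` {1..i})"
  define A where "A = (\<lambda>a b::real. - 2 * \<alpha> * (a\<^sup>2 + b\<^sup>2) powr ((1 + \<alpha>) / 2))"
  define c where "c = (\<lambda>a b::real. 2 * (1 + \<alpha>) / (a\<^sup>2 + b\<^sup>2) powr ((1 - \<alpha>) / 2))"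
  define S where "S = (\<lambda>a b. (SUP y\<in>Omega_tilde v i \<kappa> a b. ereal (y \<bullet> w)))"
  have T: "?T (a, b) = ereal (A a b) + ereal (c a b) * (S a b + ereal (b * norm z))" for a b
    by (simp add: A_def c_def S_def)
  have cpos: "c a b > 0" if "a\<^sup>2 + b\<^sup>2 > 0" for a b
    using that assms(5) unfolding c_def by (auto intro!: divide_pos_pos)
  have zV: "z \<bullet> u = 0" if "u \<in> V" for u using assms(8) that V_def by auto
  have vV: "v j \<in> V" if "j \<in> {1..i}" for j using that V_def by (auto intro: span_base)
  have vnorm: "norm (v j) = 1" if "j \<in> {1..N}" for j
    using orth that unfolding orthonormal_family_def by (simp add: norm_eq_1)
  have Lval: "hfun \<alpha> y + grad (hfun \<alpha>) y \<bullet> (x - y) = A a b + c a b * (y \<bullet> x)"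
    if "y \<noteq> 0" "(norm y)\<^sup>2 = a\<^sup>2 + b\<^sup>2" for y a b
    using val_hfun[OF that(1), of \<alpha> x] that(2) by (simp add: A_def c_def)
  have nz: "norm z > 0" using assms(9) by simp
  show ?thesis
  proof (rule antisym)
    show "?L \<le> (SUP ab\<in>?I. ?T ab)"
      unfolding wall_def
    proof (rule SUP_least)
      fix y assume yO: "y \<in> Omega v N \<kappa> \<delta>"
      have ny: "norm y \<in> {\<delta>..1}" and ncone: "\<forall>j\<in>{1..N}. y \<notin> corr_cone \<kappa> (v j)"
        using yO unfolding Omega_def by auto
      have y0: "y \<noteq> 0" using ny assms(3) by auto
      obtain y1 y2 where y1: "y1 \<in> V" and y2: "\<And>u. u \<in> V \<Longrightarrow> orthogonal y2 u" and yd: "y = y1 + y2"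
        using orthogonal_subspace_decomp_exists[of "v ` {1..i}" y] unfolding V_def by metis
      define a where "a = norm y1"
      define b where "b = norm y2"
      have o12: "orthogonal y1 y2" using y2[OF y1] by (simp add: orthogonal_commute)
      have pyth: "(norm y)\<^sup>2 = a\<^sup>2 + b\<^sup>2" unfolding yd a_def b_def by (rule norm_add_Pythagorean[OF o12])
      have sq: "sqrt (a\<^sup>2 + b\<^sup>2) = norm y" using pyth[symmetric] by simp
      have abI: "(a, b) \<in> ?I"
      proof -
        have "\<delta>\<^sup>2 \<le> (norm y)\<^sup>2" using ny assms(3) by (auto intro: power_mono)
        moreover have "(norm y)\<^sup>2 \<le> 1" using ny by (simp add: power_le_one)
        ultimately show ?thesis using pyth by (auto simp: a_def b_def)
      qed
      have y1O: "y1 \<in> Omega_tilde v i \<kappa> a b"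
        unfolding Omega_tilde_def
      proof (intro CollectI conjI ballI)
        show "y1 \<in> span (v ` {1..i})" using y1 V_def by simp
        show "norm y1 = a" by (simp add: a_def)
        fix j assume j: "j \<in> {1..i}"
        have "v j \<bullet> y2 = 0" using y2[OF vV[OF j]] by (simp add: orthogonal_def inner_commute)
        hence e: "v j \<bullet> y1 = v j \<bullet> y" by (simp add: yd inner_add_right)
        have "j \<in> {1..N}" using j assms(6) by auto
        hence "\<not> (\<bar>v j \<bullet> y\<bar> / norm y \<ge> \<kappa>)" using ncone y0 unfolding corr_cone_def by auto
        moreover have "norm y > 0" using y0 by simp
        ultimately have "\<bar>v j \<bullet> y\<bar> < \<kappa> * norm y" by (simp add: not_le pos_divide_less_eq mult.commute)
        thus "\<bar>v j \<bullet> y1\<bar> < \<kappa> * sqrt (a\<^sup>2 + b\<^sup>2)" using e sq by simp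
      qed
      have yx: "y \<bullet> x = y1 \<bullet> w + y2 \<bullet> z"
      proof -
        have "y1 \<bullet> z = 0" using zV[OF y1] by (simp add: inner_commute)
        moreover have "y2 \<bullet> w = 0" using y2[of w] assms(7) V_def by (simp add: orthogonal_def)
        ultimately show ?thesis by (simp add: yd assms(11) inner_add_left inner_add_right)
      qed
      have y2z: "y2 \<bullet> z \<le> b * norm z" unfolding b_def by (rule norm_cauchy_schwarz)
      have cp: "c a b > 0" using cpos pyth y0 by (metis zero_less_power2 norm_eq_zero)
      have "ereal (hfun \<alpha> y + grad (hfun \<alpha>) y \<bullet> (x - y)) = ereal (A a b + c a b * (y1 \<bullet> w + y2 \<bullet> z))"
        using Lval[OF y0 pyth] yx by simp
      also have "\<dots> \<le> ereal (A a b + c a b * (y1 \<bullet> w + b * norm z))"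
        using y2z cp by simp
      also have "\<dots> = ereal (A a b) + ereal (c a b) * (ereal (y1 \<bullet> w) + ereal (b * norm z))"
        by simp
      also have "\<dots> \<le> ereal (A a b) + ereal (c a b) * (S a b + ereal (b * norm z))"
      proof -
        have "ereal (y1 \<bullet> w) \<le> S a b" unfolding S_def using y1O by (rule SUP_upper)
        hence "ereal (y1 \<bullet> w) + ereal (b * norm z) \<le> S a b + ereal (b * norm z)" by (rule add_right_mono)
        hence "ereal (c a b) * (ereal (y1 \<bullet> w) + ereal (b * norm z)) \<le> ereal (c a b) * (S a b + ereal (b * norm z))"
          by (rule ereal_mult_left_mono) (use cp in simp)
        thus ?thesis by (rule add_left_mono)
      qed
      also have "\<dots> = ?T (a, b)" by (rule T[symmetric])
      also have "\<dots> \<le> (SUP ab\<in>?I. ?T ab)" using abI by (rule SUP_upper)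
      finally show "ereal (hfun \<alpha> y + grad (hfun \<alpha>) y \<bullet> (x - y)) \<le> (SUP ab\<in>?I. ?T ab)" .
    qed
  next
    show "(SUP ab\<in>?I. ?T ab) \<le> ?L"
    proof (rule SUP_least)
      fix ab assume abI: "ab \<in> ?I"
      then obtain a b where ab: "ab = (a, b)" "a \<ge> 0" "b \<ge> 0" "a\<^sup>2 + b\<^sup>2 \<in> {\<delta>\<^sup>2..1}" by auto
      have dpos: "a\<^sup>2 + b\<^sup>2 > 0" using ab(4) assms(3) by (auto intro: less_le_trans[of 0 "\<delta>\<^sup>2"])
      have cp: "c a b > 0" using cpos dpos by blast
      have key: "ereal (A a b + c a b * (y1 \<bullet> w + b * norm z)) \<le> ?L"
        if y1O: "y1 \<in> Omega_tilde v i \<kappa> a b" for y1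
      proof -
        have y1: "y1 \<in> V" and na: "norm y1 = a"
          and y1c: "\<forall>j\<in>{1..i}. \<bar>v j \<bullet> y1\<bar> < \<kappa> * sqrt (a\<^sup>2 + b\<^sup>2)"
          using y1O unfolding Omega_tilde_def V_def by auto
        define y where "y = y1 + (b / norm z) *\<^sub>R z"
        have y1z: "y1 \<bullet> z = 0" using zV[OF y1] by (simp add: inner_commute)
        have o: "orthogonal y1 ((b / norm z) *\<^sub>R z)" using y1z by (simp add: orthogonal_def)
        have pyth: "(norm y)\<^sup>2 = a\<^sup>2 + b\<^sup>2"
          unfolding y_def norm_add_Pythagorean[OF o] using nz ab(3) na by simp
        have ny: "norm y = sqrt (a\<^sup>2 + b\<^sup>2)" using pyth by (metis norm_ge_zero real_sqrt_unique)
        have y0: "y \<noteq> 0" using pyth dpos by auto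
        have nyp: "norm y > 0" using y0 by simp
        have ble: "b \<le> norm y" unfolding ny using ab(2,3) by (simp add: real_le_rsqrt)
        have yO: "y \<in> Omega v N \<kappa> \<delta>"
          unfolding Omega_def
        proof (intro CollectI conjI ballI)
          have "\<delta>\<^sup>2 \<le> (norm y)\<^sup>2" "(norm y)\<^sup>2 \<le> 1" using pyth ab(4) by auto
          thus "norm y \<in> {\<delta>..1}" using assms(3)
            by (auto simp: power_le_one_iff abs_le_square_iff[symmetric] intro: power2_le_imp_le)
          fix j assume j: "j \<in> {1..N}"
          have "\<bar>v j \<bullet> y\<bar> < \<kappa> * norm y"
          proof (cases "j \<le> i")
            case True
            hence jj: "j \<in> {1..i}" using j by auto
            have "v j \<bullet> z = 0" using zV[OF vV[OF jj]] by (simp add: inner_commute)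
            hence "v j \<bullet> y = v j \<bullet> y1" by (simp add: y_def inner_add_right)
            thus ?thesis using y1c jj ny by simp
          next
            case False
            hence ji: "i < j" "j \<le> N" using j by auto
            have "v j \<bullet> y1 = 0" using span_orth[OF orth ji y1[unfolded V_def]] .
            hence e: "v j \<bullet> y = (b / norm z) * (v j \<bullet> z)" by (simp add: y_def inner_add_right)
            have zj: "\<bar>v j \<bullet> z\<bar> < \<kappa> * norm z" using assms(10) ji by auto
            show ?thesis
            proof (cases "b = 0")
              case True thus ?thesis using e nyp assms(2) by simp
            next
              case False
              hence bp: "b > 0" using ab(3) by simp
              have "\<bar>v j \<bullet> y\<bar> = (b / norm z) * \<bar>v j \<bullet> z\<bar>" using e bp nz by (simp add: abs_mult)
              also have "\<dots> < (b / norm z) * (\<kappa> * norm z)" using zj bp nz by (intro mult_strict_left_mono) auto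
              also have "\<dots> = \<kappa> * b" using nz by simp
              also have "\<dots> \<le> \<kappa> * norm y" using ble assms(2) by simp
              finally show ?thesis .
            qed
          qed
          hence "\<bar>v j \<bullet> y\<bar> / norm y < \<kappa>" using nyp by (simp add: divide_less_eq mult.commute)
          thus "y \<notin> corr_cone \<kappa> (v j)" unfolding corr_cone_def by auto
        qed
        have yx: "y \<bullet> x = y1 \<bullet> w + b * norm z"
        proof -
          have "z \<bullet> w = 0" using zV assms(7) V_def by simp
          hence "y \<bullet> x = y1 \<bullet> w + (b / norm z) * (z \<bullet> z)"
            using y1z by (simp add: y_def assms(11) inner_add_left inner_add_right)
          also have "z \<bullet> z = norm z * norm z" by (simp add: dot_square_norm power2_eq_square)
          finally show ?thesis using nz by simp
        qed
        have "ereal (A a b + c a b * (y1 \<bullet> w + b * norm z)) = ereal (hfun \<alpha> y + grad (hfun \<alpha>) y \<bullet> (x - y))"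
          using Lval[OF y0 pyth] yx by simp
        also have "\<dots> \<le> ?L" unfolding wall_def using yO by (rule SUP_upper)
        finally show ?thesis .
      qed
      show "?T ab \<le> ?L"
      proof (cases "Omega_tilde v i \<kappa> a b = {}")
        case True
        hence "S a b = - \<infinity>" unfolding S_def by (simp add: bot_ereal_def)
        thus ?thesis using cp unfolding ab(1) T by simp
      next
        case False
        then obtain y0 where y0: "y0 \<in> Omega_tilde v i \<kappa> a b" by auto
        show ?thesis
        proof (cases ?L)
          case (real l)
          have "S a b \<le> ereal ((l - A a b) / c a b - b * norm z)"
            unfolding S_def
          proof (rule SUP_least)
            fix y1 assume "y1 \<in> Omega_tilde v i \<kappa> a b"
            from key[OF this] real have "A a b + c a b * (y1 \<bullet> w + b * norm z) \<le> l" by simp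
            hence "c a b * (y1 \<bullet> w + b * norm z) \<le> l - A a b" by simp
            hence "y1 \<bullet> w + b * norm z \<le> (l - A a b) / c a b" using cp by (simp add: le_divide_eq mult.commute)
            thus "ereal (y1 \<bullet> w) \<le> ereal ((l - A a b) / c a b - b * norm z)" by simp
          qed
          hence "S a b + ereal (b * norm z) \<le> ereal ((l - A a b) / c a b - b * norm z) + ereal (b * norm z)"
            by (rule add_right_mono)
          hence "ereal (c a b) * (S a b + ereal (b * norm z)) \<le> ereal (c a b) * (ereal ((l - A a b) / c a b - b * norm z) + ereal (b * norm z))"
            by (rule ereal_mult_left_mono) (use cp in simp)
          hence "ereal (A a b) + ereal (c a b) * (S a b + ereal (b * norm z)) \<le> ereal (A a b) + ereal (c a b) * (ereal ((l - A a b) / c a b - b * norm z) + ereal (b * norm z))"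
            by (rule add_left_mono)
          also have "\<dots> = ereal l" using cp by simp
          finally show ?thesis unfolding ab(1) T using real by simp
        next
          case PInf thus ?thesis by simp
        next
          case MInf thus ?thesis using key[OF y0] by simp
        qed
      qed
    qed
  qed
qed

end
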